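(* Let $\Lambda$ be a lattice, $\phi$ a positive semidefinite quadratic form on $\Lambda\otimes\mathbb{R}$, and $P$ a perfect Delaunay polyhedron in $\mathrm{Del}(\Lambda,\phi)$. Let $\Gamma$ be a sublattice of $\Lambda$ and let $D,D'$ be Delaunay polytopes (of the affine lattices $\Lambda\cap\operatorname{aff}D$, $\Lambda\cap\operatorname{aff}D'$ with respect to the restrictions of $\phi$) such that $\operatorname{vert}P=\operatorname{vert}D\oplus\Gamma=\operatorname{vert}D'\oplus\Gamma$. If $\operatorname{aff}D$ is parallel to $\operatorname{aff}D'$, then $D'=D+\mathbf{u}$ for some $\mathbf{u}\in\Gamma$.
   Context: For a lattice $L$ and positive semidefinite form $\phi$, a Delaunay polyhedron of $\mathrm{Del}(L,\phi)$ is $\operatorname{conv}\mathcal{V}(f)$, where $f$ is a real quadratic polynomial with quadratic part $\phi$, $f\ge0$ on $L$, and $\mathcal{V}(f)=\{\mathbf{z}\in L: f(\mathbf{z})=0\}\ne\emptyset$; its "vertex set" $\operatorname{vert}$ means the set $\mathcal{V}(f)$ of lattice points on it (even when the polyhedron is unbounded). It is perfect if $f$ can be chosen so that every real polynomial of degree at most $2$ vanishing on $\mathcal{V}(f)$ is a scalar multiple of $f$. A Delaunay polytope is a bounded Delaunay polyhedron. The notation $\operatorname{vert}P=\operatorname{vert}D\oplus\Gamma$ means that $\operatorname{vert}P=\{\mathbf{v}+\mathbf{u}:\mathbf{v}\in\operatorname{vert}D,\ \mathbf{u}\in\Gamma\}$ and each element of $\operatorname{vert}P$ has a unique such representation. 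*)

theory Defs
  imports "HOL-Analysis.Analysis"
begin

text \<open>The lattice is taken to be the integer lattice inside real^'n (every lattice is
  isomorphic to Z^n, the form being transported accordingly).\<close>
definition int_lattice :: "(real^'n) set" where
  "int_lattice = {x. \<forall>i. x $ i \<in> \<int>}"

definition qpoly :: "real^'n^'n \<Rightarrow> real^'n \<Rightarrow> real \<Rightarrow> real^'n \<Rightarrow> real" where
  "qpoly A b c x = x \<bullet> (A *v x) + b \<bullet> x + c"

definition psd_form :: "real^'n^'n \<Rightarrow> bool" where
  "psd_form Q \<longleftrightarrow> transpose Q = Q \<and> (\<forall>x. 0 \<le> x \<bullet> (Q *v x))"

definition zero_set :: "(real^'n) set \<Rightarrow> (real^'n \<Rightarrow> real) \<Rightarrow> (real^'n) set" where
  "zero_set L f = {z \<in> L. f z = 0}"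

definition delaunay_polyhedron ::
  "(real^'n) set \<Rightarrow> real^'n^'n \<Rightarrow> (real^'n) set \<Rightarrow> bool" where
  "delaunay_polyhedron L Q P \<longleftrightarrow>
     (\<exists>b c. (\<forall>z\<in>L. 0 \<le> qpoly Q b c z) \<and> zero_set L (qpoly Q b c) \<noteq> {} \<and>
            P = convex hull (zero_set L (qpoly Q b c)))"

definition perfect_delaunay ::
  "(real^'n) set \<Rightarrow> real^'n^'n \<Rightarrow> (real^'n) set \<Rightarrow> bool" where
  "perfect_delaunay L Q P \<longleftrightarrow>
     (\<exists>b c. (\<forall>z\<in>L. 0 \<le> qpoly Q b c z) \<and> zero_set L (qpoly Q b c) \<noteq> {} \<and>
            P = convex hull (zero_set L (qpoly Q b c)) \<and>
            (\<forall>A b' c'. (\<forall>z \<in> zero_set L (qpoly Q b c). qpoly A b' c' z = 0) \<longrightarrow>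
                (\<exists>k::real. \<forall>x. qpoly A b' c' x = k * qpoly Q b c x)))"

text \<open>D is a Delaunay polytope of the affine lattice L \<inter> aff D w.r.t. the restriction
  of phi to aff D (quadratic functions on aff D with quadratic part phi| are exactly
  restrictions of qpoly Q b c).\<close>
definition delaunay_polytope_aff ::
  "(real^'n) set \<Rightarrow> real^'n^'n \<Rightarrow> (real^'n) set \<Rightarrow> bool" where
  "delaunay_polytope_aff L Q D \<longleftrightarrow>
     delaunay_polyhedron (L \<inter> affine hull D) Q D \<and> bounded D"

definition vert :: "(real^'n) set \<Rightarrow> (real^'n) set \<Rightarrow> (real^'n) set" where
  "vert L P = L \<inter> P"

definition sublattice :: "(real^'n) set \<Rightarrow> (real^'n) set \<Rightarrow> bool" where
  "sublattice G L \<longleftrightarrow> G \<subseteq> L \<and> 0 \<in> G \<and> (\<forall>x\<in>G. \<forall>y\<in>G. x + y \<in> G \<and> - x \<in> G)"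

definition direct_sum_eq :: "(real^'n) set \<Rightarrow> (real^'n) set \<Rightarrow> (real^'n) set \<Rightarrow> bool" where
  "direct_sum_eq V W G \<longleftrightarrow>
     V = {v + u | v u. v \<in> W \<and> u \<in> G} \<and>
     (\<forall>v1\<in>W. \<forall>v2\<in>W. \<forall>u1\<in>G. \<forall>u2\<in>G. v1 + u1 = v2 + u2 \<longrightarrow> v1 = v2 \<and> u1 = u2)"

end

theory Submission imports Defs begin

lemma qf_identity:
  fixes Q :: "real^'n^'n"
  shows "(1-t) * (x \<bullet> (Q *v x)) + t * (y \<bullet> (Q *v y)) - (((1-t) *\<^sub>R x + t *\<^sub>R y) \<bullet> (Q *v ((1-t) *\<^sub>R x + t *\<^sub>R y)))
     = t * (1-t) * ((x - y) \<bullet> (Q *v (x - y)))"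
  by (simp add: matrix_vector_right_distrib matrix_vector_mult_diff_distrib matrix_vector_mult_scaleR
      inner_add_left inner_add_right inner_diff_left inner_diff_right algebra_simps)

lemma qpoly_convex:
  fixes Q :: "real^'n^'n"
  assumes "psd_form Q"
  shows "convex_on UNIV (qpoly Q b c)"
proof (rule convex_onI)
  fix t :: real and x y :: "real^'n"
  assume t: "0 < t" "t < 1"
  have "0 \<le> t * (1-t) * ((x - y) \<bullet> (Q *v (x - y)))"
    using assms t unfolding psd_form_def by simp
  then show "qpoly Q b c ((1 - t) *\<^sub>R x + t *\<^sub>R y) \<le> (1 - t) * qpoly Q b c x + t * qpoly Q b c y"
    using qf_identity[of t x Q y] unfolding qpoly_def
    by (simp add: inner_add_right algebra_simps)
qed simp

lemma zero_set_hull: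
  assumes "psd_form Q" "\<forall>z\<in>S. 0 \<le> qpoly Q b c z"
  shows "S \<inter> convex hull (zero_set S (qpoly Q b c)) = zero_set S (qpoly Q b c)"
proof
  have "\<forall>x\<in>convex hull (zero_set S (qpoly Q b c)). qpoly Q b c x \<le> 0"
    by (rule convex_on_convex_hull_bound) (auto intro: convex_on_subset[OF qpoly_convex[OF assms(1)]] simp: zero_set_def)
  then show "S \<inter> convex hull (zero_set S (qpoly Q b c)) \<subseteq> zero_set S (qpoly Q b c)"
    using assms(2) by (force simp: zero_set_def)
  show "zero_set S (qpoly Q b c) \<subseteq> S \<inter> convex hull (zero_set S (qpoly Q b c))"
    using hull_subset[of "zero_set S (qpoly Q b c)" convex] by (auto simp: zero_set_def)
qed

lemma lat_add: "x \<in> int_lattice \<Longrightarrow> y \<in> int_lattice \<Longrightarrow> x + y \<in> int_lattice"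
  by (auto simp: int_lattice_def)
lemma lat_diff: "x \<in> int_lattice \<Longrightarrow> y \<in> int_lattice \<Longrightarrow> x - y \<in> int_lattice"
  by (auto simp: int_lattice_def)

lemma shift_qpoly:
  fixes Q :: "real^'n^'n"
  shows "qpoly 0 (Q *v u + u v* Q) (u \<bullet> (Q *v u) + b \<bullet> u) x = qpoly Q b c (x + u) - qpoly Q b c x"
  unfolding qpoly_def
  by (simp add: matrix_vector_right_distrib inner_add_left inner_add_right dot_lmul_matrix
       inner_commute[of x "Q *v u"] algebra_simps)

lemma affine_eq_on_hull:
  fixes Q :: "real^'n^'n"
  assumes "\<forall>z\<in>S. qpoly Q b c z = qpoly Q b' c' z"
  shows "\<forall>z\<in>affine hull S. qpoly Q b c z = qpoly Q b' c' z"
proof -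
  have e: "{x. qpoly Q b c x = qpoly Q b' c' x} = {x. (b - b') \<bullet> x = c' - c}"
    unfolding qpoly_def by (auto simp: inner_diff_left algebra_simps)
  have "affine {x. qpoly Q b c x = qpoly Q b' c' x}"
    unfolding e by (rule affine_hyperplane)
  moreover have "S \<subseteq> {x. qpoly Q b c x = qpoly Q b' c' x}" using assms by auto
  ultimately have "affine hull S \<subseteq> {x. qpoly Q b c x = qpoly Q b' c' x}"
    by (rule hull_minimal[rotated])
  then show ?thesis by auto
qed

theorem lemma1:
  fixes Q :: "real^'n^'n" and P D D' G :: "(real^'n) set"
  assumes "psd_form Q"
    and "perfect_delaunay int_lattice Q P"
    and "sublattice G int_lattice"
    and "delaunay_polytope_aff int_lattice Q D"
    and "delaunay_polytope_aff int_lattice Q D'"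
    and "direct_sum_eq (vert int_lattice P) (vert int_lattice D) G"
    and "direct_sum_eq (vert int_lattice P) (vert int_lattice D') G"
    and "\<exists>t. affine hull D' = (\<lambda>x. t + x) ` (affine hull D)"
  shows "\<exists>u\<in>G. D' = (\<lambda>x. x + u) ` D"
proof -
  let ?L = "int_lattice :: (real^'n) set"
  obtain bf cf where fnn: "\<forall>z\<in>?L. 0 \<le> qpoly Q bf cf z"
    and Zne: "zero_set ?L (qpoly Q bf cf) \<noteq> {}"
    and Pdef: "P = convex hull (zero_set ?L (qpoly Q bf cf))"
    and perf: "\<And>A b' c'. (\<forall>z \<in> zero_set ?L (qpoly Q bf cf). qpoly A b' c' z = 0) \<Longrightarrow>
                (\<exists>k::real. \<forall>x. qpoly A b' c' x = k * qpoly Q bf cf x)"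
    using assms(2) unfolding perfect_delaunay_def by blast
  define f where "f = qpoly Q bf cf"
  define Z where "Z = zero_set ?L f"
  define X where "X = vert ?L P"
  have XZ: "X = Z"
    using zero_set_hull[OF assms(1) fnn] unfolding X_def Z_def f_def vert_def Pdef by simp
  have Xsum: "X = {v + u | v u. v \<in> vert ?L D \<and> u \<in> G}"
    using assms(6) unfolding direct_sum_eq_def X_def by blast
  have G: "G \<subseteq> ?L" "0 \<in> G" "\<And>x y. x \<in> G \<Longrightarrow> y \<in> G \<Longrightarrow> x + y \<in> G"
    using assms(3) unfolding sublattice_def by auto
  have Zf: "\<And>z. z \<in> Z \<Longrightarrow> f z = 0" unfolding Z_def zero_set_def by auto
  have inv: "f (x + u) = f x" if u: "u \<in> G" for x u
  proof -
    define b' where "b' = Q *v u + u v* Q"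
    define c' where "c' = u \<bullet> (Q *v u) + bf \<bullet> u"
    have H: "\<And>x. qpoly 0 b' c' x = f (x + u) - f x"
      unfolding b'_def c'_def f_def by (rule shift_qpoly)
    have zz: "f (z + u) = 0" if z: "z \<in> Z" for z
    proof -
      from z XZ Xsum obtain v u' where "z = v + u'" "v \<in> vert ?L D" "u' \<in> G" by auto
      then have "z + u = v + (u' + u)" "u' + u \<in> G" using G(3)[OF \<open>u' \<in> G\<close> u]
        by (auto simp: add.assoc)
      then have "z + u \<in> X" using Xsum \<open>v \<in> vert ?L D\<close> by blast
      then show ?thesis using XZ Zf by auto
    qed
    have "\<forall>z \<in> zero_set ?L (qpoly Q bf cf). qpoly 0 b' c' z = 0"
      using H zz Zf unfolding Z_def f_def by auto
    then obtain k where k: "\<And>x. qpoly 0 b' c' x = k * f x" using perf unfolding f_def by blast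
    show ?thesis
    proof (cases "k = 0")
      case True then show ?thesis using H k by (metis eq_iff_diff_eq_0 mult_zero_left)
    next
      case False
      have lin: "qpoly 0 b' c' y = b' \<bullet> y + c'" for y unfolding qpoly_def by simp
      have qz: "y \<bullet> (Q *v y) = 0" for y
      proof -
        have m: "Q *v (- y) = - (Q *v y)"
          using matrix_vector_mult_diff_distrib[of Q 0 y] by simp
        have "f y + f (- y) - 2 * f 0 = 2 * (y \<bullet> (Q *v y))"
          unfolding f_def qpoly_def by (simp add: m)
        moreover have "k * (f y + f (- y) - 2 * f 0) = 0"
          using k[of y] k[of "-y"] k[of 0] lin[of y] lin[of "-y"] lin[of 0]
          by (simp add: algebra_simps)
        ultimately show ?thesis using False by simp
      qed
      have Hc: "f (y + u) - f y = bf \<bullet> u" for y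
        using qz[of "y + u"] qz[of y] unfolding f_def qpoly_def by (simp add: inner_add_right)
      from Zne obtain z0 where "z0 \<in> Z" unfolding Z_def f_def by auto
      then have "bf \<bullet> u = 0" using Hc[of z0] zz Zf by simp
      then show ?thesis using Hc[of x] by simp
    qed
  qed
  have Dfacts: "\<exists>g. (\<forall>z\<in>affine hull E. g z = f z) \<and>
        E = convex hull {z \<in> ?L \<inter> affine hull E. g z = 0} \<and>
        {z \<in> ?L \<inter> affine hull E. g z = 0} \<subseteq> ?L \<inter> E"
    if E: "delaunay_polytope_aff ?L Q E" "direct_sum_eq X (vert ?L E) G" for E
  proof -
    obtain b c where Edef: "E = convex hull (zero_set (?L \<inter> affine hull E) (qpoly Q b c))"
      using E(1) unfolding delaunay_polytope_aff_def delaunay_polyhedron_def by blast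
    define ZE where "ZE = zero_set (?L \<inter> affine hull E) (qpoly Q b c)"
    have sub: "ZE \<subseteq> ?L \<inter> E"
      using hull_subset[of ZE convex] Edef unfolding ZE_def zero_set_def by auto
    have "ZE \<subseteq> X"
    proof
      fix z assume "z \<in> ZE"
      then have "z \<in> vert ?L E" using sub unfolding vert_def by auto
      moreover have "z = z + 0" by simp
      ultimately show "z \<in> X" using E(2) G(2) unfolding direct_sum_eq_def
        by blast
    qed
    then have "\<forall>z\<in>ZE. qpoly Q b c z = qpoly Q bf cf z"
      using XZ Zf unfolding ZE_def zero_set_def f_def by auto
    then have "\<forall>z\<in>affine hull ZE. qpoly Q b c z = qpoly Q bf cf z"
      by (rule affine_eq_on_hull)
    moreover have "affine hull ZE = affine hull E"
      using Edef unfolding ZE_def by (metis affine_hull_convex_hull)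
    ultimately show ?thesis
      using Edef sub unfolding ZE_def zero_set_def f_def
      by (intro exI[of _ "qpoly Q b c"]) auto
  qed
  obtain g where g: "\<forall>z\<in>affine hull D. g z = f z"
      "D = convex hull {z \<in> ?L \<inter> affine hull D. g z = 0}"
    using Dfacts[OF assms(4) assms(6)[folded X_def]] by blast
  obtain g' where g': "\<forall>z\<in>affine hull D'. g' z = f z"
      "D' = convex hull {z \<in> ?L \<inter> affine hull D'. g' z = 0}"
      "{z \<in> ?L \<inter> affine hull D'. g' z = 0} \<subseteq> ?L \<inter> D'"
    using Dfacts[OF assms(5) assms(7)[folded X_def]] by blast
  define ZD where "ZD = {z \<in> ?L \<inter> affine hull D. g z = 0}"
  define ZD' where "ZD' = {z \<in> ?L \<inter> affine hull D'. g' z = 0}"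
  have "ZD' \<noteq> {}"
    using g'(2) unfolding ZD'_def by (metis assms(5) convex_hull_empty delaunay_polyhedron_def
       delaunay_polytope_aff_def zero_set_def hull_subset subset_empty)
  then obtain v0 where v0: "v0 \<in> ZD'" by blast
  then have "v0 \<in> vert ?L D'" using g'(3) unfolding ZD'_def vert_def by auto
  then have "v0 \<in> X" using assms(7) G(2) unfolding direct_sum_eq_def X_def
    by (metis (mono_tags, lifting) add.right_neutral mem_Collect_eq)
  then obtain w0 u0 where w0: "v0 = w0 + u0" "w0 \<in> vert ?L D" "u0 \<in> G"
    using Xsum by blast
  have u0L: "u0 \<in> ?L" using G(1) w0(3) by auto
  obtain t where t: "affine hull D' = (\<lambda>x. t + x) ` (affine hull D)" using assms(8) by blast
  have aff: "affine (affine hull D)" by simp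
  have w0A: "w0 \<in> affine hull D" using w0(2) hull_subset[of D affine] unfolding vert_def by auto
  have v0A: "v0 \<in> affine hull D'" using v0 unfolding ZD'_def by auto
  then have v0t: "v0 - t \<in> affine hull D" using t by auto
  have affeq: "y \<in> affine hull D' \<longleftrightarrow> y - u0 \<in> affine hull D" for y
  proof
    assume "y \<in> affine hull D'"
    then have "y - t \<in> affine hull D" using t by auto
    from mem_affine_3_minus[OF aff this w0A v0t, of 1] show "y - u0 \<in> affine hull D"
      using w0(1) by (simp add: algebra_simps)
  next
    assume "y - u0 \<in> affine hull D"
    from mem_affine_3_minus[OF aff this v0t w0A, of 1] have "y - t \<in> affine hull D"
      using w0(1) by (simp add: algebra_simps)
    then have "t + (y - t) \<in> affine hull D'" using t by blast
    then show "y \<in> affine hull D'" by simp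
  qed
  have ZZ: "ZD' = (\<lambda>x. u0 + x) ` ZD"
  proof
    show "ZD' \<subseteq> (\<lambda>x. u0 + x) ` ZD"
    proof
      fix z assume z: "z \<in> ZD'"
      then have zA: "z \<in> affine hull D'" "z \<in> ?L" "g' z = 0" unfolding ZD'_def by auto
      have "z - u0 \<in> affine hull D" using zA affeq by auto
      moreover have "z - u0 \<in> ?L" using zA u0L lat_diff by auto
      moreover have "g (z - u0) = 0"
        using g(1) \<open>z - u0 \<in> affine hull D\<close> inv[OF w0(3), of "z - u0"] g'(1) zA by simp
      ultimately have "z - u0 \<in> ZD" unfolding ZD_def by auto
      then show "z \<in> (\<lambda>x. u0 + x) ` ZD" by (rule rev_image_eqI) simp
    qed
    show "(\<lambda>x. u0 + x) ` ZD \<subseteq> ZD'"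
    proof
      fix y assume "y \<in> (\<lambda>x. u0 + x) ` ZD"
      then obtain z where z: "z \<in> ZD" "y = u0 + z" by auto
      then have zA: "z \<in> affine hull D" "z \<in> ?L" "g z = 0" unfolding ZD_def by auto
      have "y \<in> affine hull D'" using affeq zA z(2) by simp
      moreover have "y \<in> ?L" using zA u0L lat_add z(2) by auto
      moreover have "g' y = 0"
        using g'(1) \<open>y \<in> affine hull D'\<close> inv[OF w0(3), of z] g(1) zA z(2) by (simp add: add.commute)
      ultimately show "y \<in> ZD'" unfolding ZD'_def by auto
    qed
  qed
  have "D' = (\<lambda>x. u0 + x) ` D"
    using g(2) g'(2) ZZ unfolding ZD_def[symmetric] ZD'_def[symmetric]
    by (simp add: convex_hull_translation)
  moreover have "(\<lambda>x. u0 + x) = (\<lambda>x. x + u0)" by (simp add: add.commute)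
  ultimately show ?thesis using w0(3) by auto
qed

end
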